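(* Under the standing assumptions below, for $j=1,\dots,p$ let $z^j=M-(M_j-m_j)e^j$, where $e^j$ is the $j$-th unit vector of $\mathbb{R}^p$. Suppose $(\bar x,\bar y)$ is an optimal solution of (BP) and there is an index $i$ with $f_i(\bar x)=m_i$. Then $$h(\bar x,\bar y)=\varphi(z^i)=\min\{\varphi(z^j)\mid j=1,\dots,p\},$$ and if $\bar z\in\{z^1,\dots,z^p\}$ attains this minimum, then every optimal solution of $MP(\bar z)$ is an optimal solution of (BP).
   Context: Standing assumptions: $X=\{x\in\mathbb{R}^n\mid s(x)\le 0\}$ is nonempty, bounded and convex, where $s:\mathbb{R}^n\to\mathbb{R}^q$ is continuously differentiable with quasiconvex components. $f=(f_1,\dots,f_p):\mathbb{R}^n\to\mathbb{R}^p$ is continuously differentiable with each $f_i$ pseudoconvex; $g:\mathbb{R}^n\times\mathbb{R}^m\to\mathbb{R}^\ell$ is continuously differentiable with quasiconvex components; $h:\mathbb{R}^n\times\mathbb{R}^m\to\mathbb{R}$ is continuous and pseudoconvex. For $a,b\in\mathbb{R}^p$, $a\le b$ means $a_i\le b_i$ for all $i$ and $a<b$ means $a_i<b_i$ for all $i$. $X_{WE}$ denotes the set of $x\in X$ such that there is no $x'\in X$ with $f(x')<f(x)$. Problem (BP): minimize $h(x,y)$ subject to $g(x,y)\le 0$, $y\in\mathbb{R}^m_+$, $x\in X_{WE}$. Let $\mathcal{G}=\{(x,y)\mid x\in X,\ y\in\mathbb{R}^m_+,\ g(x,y)\le 0\}$. Let $m\in\mathbb{R}^p$ be given by $m_i=\min\{f_i(x)\mid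 x\in X\}$, and let $M\in\mathbb{R}^p$ satisfy $f(x)\le M$ for all $x\in X$. For $z\in\mathbb{R}^p$ with $m\le z\le M$, $MP(z)$ is the problem $\min\{h(x,y)\mid (x,y)\in\mathcal{G},\ f(x)\le z\}$ and $\varphi(z)$ is its optimal value ($+\infty$ if infeasible). *)

theory Defs
  imports "HOL-Analysis.Analysis" "HOL-Library.Extended_Real"
begin

definition C1_fun :: "('a::real_normed_vector \<Rightarrow> 'b::real_normed_vector) \<Rightarrow> bool" where
  "C1_fun f \<longleftrightarrow> (\<exists>f'. (\<forall>x. (f has_derivative blinfun_apply (f' x)) (at x)) \<and> continuous_on UNIV f')"

definition quasiconvex_fun :: "('a::real_vector \<Rightarrow> real) \<Rightarrow> bool" where
  "quasiconvex_fun f \<longleftrightarrow>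
     (\<forall>x y u. 0 \<le> u \<and> u \<le> 1 \<longrightarrow> f (u *\<^sub>R x + (1 - u) *\<^sub>R y) \<le> max (f x) (f y))"

definition pseudoconvex_diff :: "('a::real_normed_vector \<Rightarrow> real) \<Rightarrow> bool" where
  "pseudoconvex_diff f \<longleftrightarrow> (\<forall>x. f differentiable (at x)) \<and>
     (\<forall>x y. f y < f x \<longrightarrow> frechet_derivative f (at x) (y - x) < 0)"

(* pseudoconvexity of a (possibly nondifferentiable) function via the upper Dini
   directional derivative (Diewert); coincides with the above for differentiable f *)
definition pseudoconvex_dini :: "('a::real_normed_vector \<Rightarrow> real) \<Rightarrow> bool" where
  "pseudoconvex_dini f \<longleftrightarrow>
     (\<forall>x y. f y < f x \<longrightarrow>
        Limsup (at_right 0) (\<lambda>t::real. ereal ((f (x + t *\<^sub>R (y - x)) - f x) / t)) < 0)"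

definition Xset :: "('q \<Rightarrow> 'x \<Rightarrow> real) \<Rightarrow> 'x set" where
  "Xset s = {x. \<forall>k. s k x \<le> 0}"

definition XWE :: "('q \<Rightarrow> 'x \<Rightarrow> real) \<Rightarrow> ('p \<Rightarrow> 'x \<Rightarrow> real) \<Rightarrow> 'x set" where
  "XWE s f = {x \<in> Xset s. \<not> (\<exists>x'\<in>Xset s. \<forall>i. f i x' < f i x)}"

definition Gset :: "('q \<Rightarrow> 'x \<Rightarrow> real) \<Rightarrow> ('l \<Rightarrow> ('x \<times> (real^'m)) \<Rightarrow> real) \<Rightarrow> ('x \<times> (real^'m)) set" where
  "Gset s g = {(x, y). x \<in> Xset s \<and> (\<forall>k. 0 \<le> y $ k) \<and> (\<forall>k. g k (x, y) \<le> 0)}"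

definition BP_feas :: "('q \<Rightarrow> 'x \<Rightarrow> real) \<Rightarrow> ('p \<Rightarrow> 'x \<Rightarrow> real) \<Rightarrow> ('l \<Rightarrow> ('x \<times> (real^'m)) \<Rightarrow> real)
     \<Rightarrow> ('x \<times> (real^'m)) set" where
  "BP_feas s f g = {(x, y). (\<forall>k. g k (x, y) \<le> 0) \<and> (\<forall>k. 0 \<le> y $ k) \<and> x \<in> XWE s f}"

definition BP_opt :: "('q \<Rightarrow> 'x \<Rightarrow> real) \<Rightarrow> ('p \<Rightarrow> 'x \<Rightarrow> real) \<Rightarrow> ('l \<Rightarrow> ('x \<times> (real^'m)) \<Rightarrow> real)
     \<Rightarrow> (('x \<times> (real^'m)) \<Rightarrow> real) \<Rightarrow> ('x \<times> (real^'m)) \<Rightarrow> bool" where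
  "BP_opt s f g h w \<longleftrightarrow> w \<in> BP_feas s f g \<and> (\<forall>w'\<in>BP_feas s f g. h w \<le> h w')"

definition mvec :: "('q \<Rightarrow> 'x \<Rightarrow> real) \<Rightarrow> ('p \<Rightarrow> 'x \<Rightarrow> real) \<Rightarrow> 'p \<Rightarrow> real" where
  "mvec s f i = Inf (f i ` Xset s)"

definition MP_feas :: "('q \<Rightarrow> 'x \<Rightarrow> real) \<Rightarrow> ('p \<Rightarrow> 'x \<Rightarrow> real) \<Rightarrow> ('l \<Rightarrow> ('x \<times> (real^'m)) \<Rightarrow> real)
     \<Rightarrow> ('p \<Rightarrow> real) \<Rightarrow> ('x \<times> (real^'m)) set" where
  "MP_feas s f g z = {(x, y). (x, y) \<in> Gset s g \<and> (\<forall>i. f i x \<le> z i)}"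

definition MP_opt :: "('q \<Rightarrow> 'x \<Rightarrow> real) \<Rightarrow> ('p \<Rightarrow> 'x \<Rightarrow> real) \<Rightarrow> ('l \<Rightarrow> ('x \<times> (real^'m)) \<Rightarrow> real)
     \<Rightarrow> (('x \<times> (real^'m)) \<Rightarrow> real) \<Rightarrow> ('p \<Rightarrow> real) \<Rightarrow> ('x \<times> (real^'m)) \<Rightarrow> bool" where
  "MP_opt s f g h z w \<longleftrightarrow> w \<in> MP_feas s f g z \<and> (\<forall>w'\<in>MP_feas s f g z. h w \<le> h w')"

(* optimal value phi(z) of MP(z); +infinity if infeasible *)
definition phi :: "('q \<Rightarrow> 'x \<Rightarrow> real) \<Rightarrow> ('p \<Rightarrow> 'x \<Rightarrow> real) \<Rightarrow> ('l \<Rightarrow> ('x \<times> (real^'m)) \<Rightarrow> real)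
     \<Rightarrow> (('x \<times> (real^'m)) \<Rightarrow> real) \<Rightarrow> ('p \<Rightarrow> real) \<Rightarrow> ereal" where
  "phi s f g h z = Inf ((\<lambda>w. ereal (h w)) ` MP_feas s f g z)"

definition zvec :: "('p \<Rightarrow> real) \<Rightarrow> ('p \<Rightarrow> real) \<Rightarrow> 'p \<Rightarrow> 'p \<Rightarrow> real" where
  "zvec M mm j = (\<lambda>i. M i - (M j - mm j) * (if i = j then 1 else 0))"

end

theory Submission
  imports Defs
begin

theorem lemma5p2:
  fixes s :: "'q::finite \<Rightarrow> real^'n \<Rightarrow> real"
    and f :: "'p::finite \<Rightarrow> real^'n \<Rightarrow> real"
    and g :: "'l::finite \<Rightarrow> ((real^'n) \<times> (real^'m)) \<Rightarrow> real"
    and h :: "((real^'n) \<times> (real^'m)) \<Rightarrow> real"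
    and M :: "'p \<Rightarrow> real"
    and xb :: "real^'n" and yb :: "real^'m" and i :: 'p
  assumes X_ne: "Xset s \<noteq> {}" and X_bdd: "bounded (Xset s)" and X_cvx: "convex (Xset s)"
    and s_C1: "\<And>k. C1_fun (s k)" and s_qc: "\<And>k. quasiconvex_fun (s k)"
    and f_C1: "\<And>j. C1_fun (f j)" and f_pc: "\<And>j. pseudoconvex_diff (f j)"
    and g_C1: "\<And>k. C1_fun (g k)" and g_qc: "\<And>k. quasiconvex_fun (g k)"
    and h_cont: "continuous_on UNIV h" and h_pc: "pseudoconvex_dini h"
    and M_ub: "\<And>x j. x \<in> Xset s \<Longrightarrow> f j x \<le> M j"
    and opt: "BP_opt s f g h (xb, yb)"
    and fi: "f i xb = mvec s f i"
  shows "ereal (h (xb, yb)) = phi s f g h (zvec M (mvec s f) i)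
       \<and> phi s f g h (zvec M (mvec s f) i) = Min (range (\<lambda>j. phi s f g h (zvec M (mvec s f) j)))
       \<and> (\<forall>zb \<in> range (zvec M (mvec s f)).
            phi s f g h zb = Min (range (\<lambda>j. phi s f g h (zvec M (mvec s f) j))) \<longrightarrow>
            (\<forall>w. MP_opt s f g h zb w \<longrightarrow> BP_opt s f g h w))"
proof -
  let ?z = "zvec M (mvec s f)"
  let ?P = "\<lambda>j. phi s f g h (?z j)"
  have bdd: "bdd_below (f j ` Xset s)" for j
  proof -
    have "\<forall>x. f j differentiable (at x)" using f_pc[of j] unfolding pseudoconvex_diff_def by blast
    hence "continuous_on UNIV (f j)"
      by (simp add: continuous_at_imp_continuous_on differentiable_imp_continuous_within)
    hence "continuous_on (closure (Xset s)) (f j)" by (rule continuous_on_subset) auto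
    moreover have "compact (closure (Xset s))" using X_bdd by (simp add: compact_closure)
    ultimately have "compact (f j ` closure (Xset s))" by (rule compact_continuous_image)
    hence "bounded (f j ` closure (Xset s))" by (rule compact_imp_bounded)
    hence "bdd_below (f j ` closure (Xset s))" by (rule bounded_imp_bdd_below)
    thus ?thesis by (rule bdd_below_mono) (use closure_subset in auto)
  qed
  have mle: "mvec s f j \<le> f j x" if "x \<in> Xset s" for j x
    unfolding mvec_def using bdd[of j] that by (auto intro: cInf_lower)
  have sub: "MP_feas s f g (?z j) \<subseteq> BP_feas s f g" for j
  proof
    fix w assume w: "w \<in> MP_feas s f g (?z j)"
    obtain x y where wxy: "w = (x,y)" by fastforce
    have G: "(x,y) \<in> Gset s g" and le: "\<And>k. f k x \<le> ?z j k" using w wxy by (auto simp: MP_feas_def)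
    have xX: "x \<in> Xset s" using G by (simp add: Gset_def)
    have "f j x \<le> mvec s f j" using le[of j] by (simp add: zvec_def)
    hence eq: "f j x = mvec s f j" using mle[OF xX, of j] by linarith
    have "x \<in> XWE s f" unfolding XWE_def
    proof (safe intro!: xX)
      fix x' assume "x' \<in> Xset s" "\<forall>i. f i x' < f i x"
      thus False using mle[of x' j] eq by (metis not_le)
    qed
    thus "w \<in> BP_feas s f g" using G wxy by (auto simp: Gset_def BP_feas_def)
  qed
  have feas: "(xb,yb) \<in> BP_feas s f g" and optv: "\<And>w'. w' \<in> BP_feas s f g \<Longrightarrow> h (xb,yb) \<le> h w'"
    using opt by (auto simp: BP_opt_def)
  have lb: "ereal (h (xb,yb)) \<le> ?P j" for j
    unfolding phi_def using sub[of j] optv by (auto intro!: Inf_greatest)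
  have xbX: "xb \<in> Xset s" using feas by (auto simp: BP_feas_def XWE_def)
  have inMP: "(xb,yb) \<in> MP_feas s f g (?z i)"
    using feas xbX fi M_ub[OF xbX]
    by (auto simp: MP_feas_def Gset_def BP_feas_def zvec_def)
  have "?P i \<le> ereal (h (xb,yb))" unfolding phi_def using inMP by (auto intro: Inf_lower)
  hence e1: "ereal (h (xb, yb)) = ?P i" using lb[of i] by simp
  have e2: "?P i = Min (range ?P)"
    by (rule Min_eqI[symmetric]) (use lb e1 in auto)
  have e3: "\<forall>zb \<in> range ?z. phi s f g h zb = Min (range ?P) \<longrightarrow>
            (\<forall>w. MP_opt s f g h zb w \<longrightarrow> BP_opt s f g h w)"
  proof (intro ballI impI allI)
    fix zb w assume zb: "zb \<in> range ?z" and ph: "phi s f g h zb = Min (range ?P)"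
      and mo: "MP_opt s f g h zb w"
    obtain j where j: "zb = ?z j" using zb by auto
    have wF: "w \<in> MP_feas s f g zb" and wmin: "\<And>w'. w' \<in> MP_feas s f g zb \<Longrightarrow> h w \<le> h w'"
      using mo by (auto simp: MP_opt_def)
    have "phi s f g h zb = ereal (h w)" unfolding phi_def
      by (rule antisym) (use wF wmin in \<open>auto intro: Inf_lower Inf_greatest\<close>)
    hence hw: "h w = h (xb,yb)" using ph e1 e2 by simp
    have wB: "w \<in> BP_feas s f g" using sub[of j] wF j by auto
    show "BP_opt s f g h w" unfolding BP_opt_def using wB optv hw by auto
  qed
  show ?thesis using e1 e2 e3 by blast
qed

end
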